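(* Let $g>0$, $H>0$, $l\in(0,1)$, $u_1,u_2\in\mathbb{R}$, and let $u\in\{u_1,u_2\}$. Define $$M=\begin{pmatrix}1&0&0\\-u&1&0\\-u&0&1\end{pmatrix},\qquad A=\begin{pmatrix}0&l&1-l\\ gH-u_1^2&2u_1-u&0\\ gH-u_2^2&0&2u_2-u\end{pmatrix}.$$ Then $M^{-1}A$ has three distinct real eigenvalues (equivalently, $x\mapsto\det(A-xM)$ has three distinct real roots). Consequently the two-layer system below, written in the quasilinear form $M(X)\partial_t X+A(X)\partial_x X=S(X)$ with $X=(H,q_1,q_2)^T$, $q_i=Hu_i$, is strictly hyperbolic whenever $H>0$.
   Context: The two-layer multilayer Saint-Venant system with mass exchange (layer thicknesses $h_1=lH$, $h_2=(1-l)H$, $l\in(0,1)$ fixed) reads $$\partial_t H+l\,\partial_x(Hu_1)+(1-l)\,\partial_x(Hu_2)=0,$$ $$\partial_t(Hu_1)+\partial_x(Hu_1^2)+\tfrac g2\partial_x(H^2)=-gH\partial_x z_b+u\big(\partial_t H+\partial_x(Hu_1)\big)-H\partial_x p^a+\tfrac{2\nu}{lH}(u_2-u_1)-\tilde\kappa\,u_1,$$ $$\partial_t(Hu_2)+\partial_x(Hu_2^2)+\tfrac g2\partial_x(H^2)=-gH\partial_x z_b+u\big(\partial_t H+\partial_x(Hu_2)\big)-\tfrac{2\nu}{(1-l)H}(u_2-u_1)-H\partial_x p^a,$$ where $H$ is the total water height, $u_1,u_2$ the layer velocities, $z_b$ the bottom, $p^a$ the atmospheric pressure, $\nu,\tilde\kappa\ge0$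 viscosity and friction coefficients, and $u=u_{3/2}$ is the interface velocity, which is taken equal to $u_1$ or $u_2$ by upwinding according to the sign of the mass exchange between the layers. The source terms (not involving derivatives of the unknowns) form $S(X)$. *)

theory Defs
  imports "HOL-Analysis.Analysis"
begin

definition is_eigenvalue :: "real^'n^'n \<Rightarrow> real \<Rightarrow> bool" where
  "is_eigenvalue B c \<longleftrightarrow> (\<exists>v::real^'n. v \<noteq> 0 \<and> B *v v = c *\<^sub>R v)"

definition Mmat :: "real \<Rightarrow> real^3^3" where
  "Mmat u = vector [vector [1, 0, 0], vector [-u, 1, 0], vector [-u, 0, 1]]"

definition Amat :: "real \<Rightarrow> real \<Rightarrow> real \<Rightarrow> real \<Rightarrow> real \<Rightarrow> real \<Rightarrow> real^3^3" where
  "Amat g H l u1 u2 u = vector [vector [0, l, 1 - l],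
                               vector [g*H - u1^2, 2*u1 - u, 0],
                               vector [g*H - u2^2, 0, 2*u2 - u]]"

end

theory Submission imports Defs begin

definition Mi :: "real \<Rightarrow> real^3^3" where
  "Mi u = vector [vector [1, 0, 0], vector [u, 1, 0], vector [u, 0, 1]]"

lemma Mi_M1: "Mi u ** Mmat u = mat 1"
  by (simp add: Mi_def Mmat_def vec_eq_iff forall_3 matrix_matrix_mult_def sum_3 mat_def)
lemma Mi_M: "Mi u ** Mmat u = mat 1" "Mmat u ** Mi u = mat 1"
  using Mi_M1 matrix_left_right_inverse by blast+

lemma inv_M: "matrix_inv (Mmat u) ** Mmat u = mat 1"
proof -
  have "\<exists>X. Mmat u ** X = mat 1 \<and> X ** Mmat u = mat 1" using Mi_M by blast
  from someI_ex[OF this] show ?thesis unfolding matrix_inv_def by blast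
qed

definition Kmat :: "real \<Rightarrow> real \<Rightarrow> real \<Rightarrow> real \<Rightarrow> real \<Rightarrow> real \<Rightarrow> real \<Rightarrow> real^3^3" where
  "Kmat g H l u1 u2 u c = (\<chi> i j. Amat g H l u1 u2 u $ i $ j - c * Mmat u $ i $ j)"

lemma eig:
  assumes "det (Kmat g H l u1 u2 u c) = 0"
  shows "is_eigenvalue (matrix_inv (Mmat u) ** Amat g H l u1 u2 u) c"
proof -
  let ?K = "Kmat g H l u1 u2 u c"
  have "\<not> invertible ?K" using assms invertible_det_nz by blast
  then have "\<not> (\<forall>x. ?K *v x = 0 \<longrightarrow> x = 0)"
    using invertible_left_inverse matrix_left_invertible_ker by blast
  then obtain v where v: "?K *v v = 0" "v \<noteq> 0" by blast
  have "?K *v v = Amat g H l u1 u2 u *v v - c *\<^sub>R (Mmat u *v v)"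
    by (simp add: Kmat_def vec_eq_iff matrix_vector_mult_def sum_subtractf sum_distrib_left algebra_simps)
  with v have Av: "Amat g H l u1 u2 u *v v = c *\<^sub>R (Mmat u *v v)" by simp
  have "(matrix_inv (Mmat u) ** Amat g H l u1 u2 u) *v v = matrix_inv (Mmat u) *v (c *\<^sub>R (Mmat u *v v))"
    by (simp add: Av matrix_vector_mul_assoc[symmetric])
  also have "\<dots> = c *\<^sub>R v"
    by (simp add: matrix_vector_mult_scaleR matrix_vector_mul_assoc inv_M)
  finally show ?thesis unfolding is_eigenvalue_def using v by blast
qed

definition P :: "real \<Rightarrow> real \<Rightarrow> real \<Rightarrow> real \<Rightarrow> real" where
  "P lam G d y = -(y^3) + 2*d*y^2 + (G-(1-lam)*d^2)*y - 2*d*lam*G"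

lemma detK1: "det (Kmat g H l u1 u2 u1 c) = P l (g*H) (u2-u1) (c-u1)"
  by (simp add: Kmat_def det_3 Amat_def Mmat_def P_def) algebra

lemma detK2: "det (Kmat g H l u1 u2 u2 c) = P (1-l) (g*H) (u1-u2) (c-u2)"
  by (simp add: Kmat_def det_3 Amat_def Mmat_def P_def) algebra


lemma P_cont: "isCont (P lam G d) x"
  unfolding P_def by (intro continuous_intros)

lemma root_dec:
  assumes "a < b" "P lam G d a > 0" "P lam G d b < 0"
  shows "\<exists>y. a < y \<and> y < b \<and> P lam G d y = 0"
proof -
  obtain y where "a \<le> y" "y \<le> b" "P lam G d y = 0"
    using IVT2[of "P lam G d" b 0 a] assms P_cont by fastforce
  then show ?thesis using assms by (metis less_eq_real_def less_irrefl)
qed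

lemma root_inc:
  assumes "a < b" "P lam G d a < 0" "P lam G d b > 0"
  shows "\<exists>y. a < y \<and> y < b \<and> P lam G d y = 0"
proof -
  obtain y where "a \<le> y" "y \<le> b" "P lam G d y = 0"
    using IVT[of "P lam G d" a 0 b] assms P_cont by fastforce
  then show ?thesis using assms by (metis less_eq_real_def less_irrefl)
qed

lemma P_split: "P lam G d y = lam * ((2*d - y)*(y^2 - G)) + (1-lam) * (y * (G - (y-d)^2))"
  unfolding P_def by (simp add: algebra_simps power2_eq_square power3_eq_cube)

lemma roots_pos:
  assumes "0 < lam" "lam < 1" "s > 0" "d > 0"
  shows "\<exists>y1 y2 y3. y1 < y2 \<and> y2 < y3 \<and> P lam (s^2) d y1 = 0 \<and> P lam (s^2) d y2 = 0 \<and> P lam (s^2) d y3 = 0"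
proof -
  let ?P = "P lam (s^2) d"
  have a: "?P (-s) > 0"
  proof -
    have "?P (-s) = (1-lam) * (s * (2*d* s + d^2))"
      unfolding P_def by (simp add: algebra_simps power2_eq_square power3_eq_cube)
    moreover have "(1-lam) * (s * (2*d* s + d^2)) > 0" using assms by (simp add: mult_pos_pos add_pos_pos)
    ultimately show ?thesis by simp
  qed
  have b: "?P 0 < 0" using assms unfolding P_def by simp
  obtain Q where Q: "Q > 0" "?P Q > 0"
  proof (cases "d \<ge> s")
    case True
    have "?P d = lam * (d * (d^2 - s^2)) + (1-lam) * (d * s^2)"
      unfolding P_def by (simp add: algebra_simps power2_eq_square power3_eq_cube)
    moreover have "d^2 - s^2 \<ge> 0" using True assms by (simp add: power_mono)
    moreover have "(1-lam) * (d * s^2) > 0" using assms by simp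
    moreover have "lam * (d * (d^2 - s^2)) \<ge> 0" using assms calculation(2) by simp
    ultimately show ?thesis using that[of d] assms by linarith
  next
    case False
    have "?P (2*d) = (1-lam) * (2*d * (s^2 - d^2))"
      unfolding P_def by (simp add: algebra_simps power2_eq_square power3_eq_cube)
    moreover have "s^2 - d^2 > 0" using False assms by (simp add: power_strict_mono)
    ultimately show ?thesis using that[of "2*d"] assms by simp
  qed
  define R where "R = 2*d + s + 1 + Q"
  have c: "?P R < 0"
  proof -
    have "(2*d - R)*(R^2 - s^2) < 0"
    proof (rule mult_neg_pos)
      show "2*d - R < 0" using assms Q unfolding R_def by simp
      have "s^2 < R^2" using assms Q unfolding R_def by (intro power_strict_mono) auto
      then show "0 < R^2 - s^2" by simp
    qed
    moreover have "R * (s^2 - (R-d)^2) < 0"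
    proof (rule mult_pos_neg)
      show "R > 0" using assms Q unfolding R_def by simp
      have "s^2 < (R-d)^2" using assms Q unfolding R_def by (intro power_strict_mono) auto
      then show "s^2 - (R-d)^2 < 0" by simp
    qed
    ultimately have "lam * ((2*d - R)*(R^2 - s^2)) + (1-lam) * (R * (s^2 - (R-d)^2)) < 0"
      using assms by (simp add: add_neg_neg mult_pos_neg)
    then show ?thesis by (simp add: P_split)
  qed
  obtain y1 where y1: "-s < y1" "y1 < 0" "?P y1 = 0" using root_dec[OF _ a b] assms by auto
  obtain y2 where y2: "0 < y2" "y2 < Q" "?P y2 = 0" using root_inc[OF _ b Q(2)] Q by auto
  obtain y3 where y3: "Q < y3" "y3 < R" "?P y3 = 0" using root_dec[OF _ Q(2) c] Q assms unfolding R_def by auto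
  show ?thesis using y1 y2 y3 by (intro exI[of _ y1] exI[of _ y2] exI[of _ y3]) auto
qed

lemma P_neg: "P lam G (-d) (-y) = - P lam G d y"
  unfolding P_def by (simp add: algebra_simps power2_eq_square power3_eq_cube)

lemma roots:
  assumes "0 < lam" "lam < 1" "G > 0"
  shows "\<exists>y1 y2 y3. y1 < y2 \<and> y2 < y3 \<and> P lam G d y1 = 0 \<and> P lam G d y2 = 0 \<and> P lam G d y3 = 0"
proof -
  define s where "s = sqrt G"
  have s: "s > 0" "G = s^2" using assms unfolding s_def by auto
  consider "d > 0" | "d < 0" | "d = 0" by linarith
  then show ?thesis
  proof cases
    case 1 then show ?thesis using roots_pos[OF assms(1,2) s(1)] s(2) by blast
  next
    case 2
    then obtain y1 y2 y3 where y: "y1 < y2" "y2 < y3" "P lam (s^2) (-d) y1 = 0"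
      "P lam (s^2) (-d) y2 = 0" "P lam (s^2) (-d) y3 = 0"
      using roots_pos[OF assms(1,2) s(1), of "-d"] by auto
    have "P lam G d (-y3) = 0" "P lam G d (-y2) = 0" "P lam G d (-y1) = 0"
      using y(3-5) P_neg[of lam G "-d"] s(2) by (metis minus_minus neg_equal_0_iff_equal)+
    then show ?thesis using y(1,2) by (intro exI[of _ "-y3"] exI[of _ "-y2"] exI[of _ "-y1"]) auto
  next
    case 3
    have "P lam G d (-s) = 0" "P lam G d 0 = 0" "P lam G d s = 0"
      using 3 s unfolding P_def by (simp_all add: power2_eq_square power3_eq_cube)
    then show ?thesis using s(1) by (intro exI[of _ "-s"] exI[of _ 0] exI[of _ s]) auto
  qed
qed

theorem mainTheorem2:
  fixes g H l u1 u2 u :: real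
  assumes "g > 0" and "H > 0" and "0 < l" and "l < 1"
    and "u = u1 \<or> u = u2"
  shows "\<exists>c1 c2 c3. c1 \<noteq> c2 \<and> c1 \<noteq> c3 \<and> c2 \<noteq> c3 \<and>
           is_eigenvalue (matrix_inv (Mmat u) ** Amat g H l u1 u2 u) c1 \<and>
           is_eigenvalue (matrix_inv (Mmat u) ** Amat g H l u1 u2 u) c2 \<and>
           is_eigenvalue (matrix_inv (Mmat u) ** Amat g H l u1 u2 u) c3"
proof -
  have G: "g*H > 0" using assms by simp
  from assms(5) show ?thesis
  proof
    assume u: "u = u1"
    obtain y1 y2 y3 where y: "y1 < y2" "y2 < y3" "P l (g*H) (u2-u1) y1 = 0"
      "P l (g*H) (u2-u1) y2 = 0" "P l (g*H) (u2-u1) y3 = 0"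
      using roots[OF assms(3,4) G] by blast
    have "is_eigenvalue (matrix_inv (Mmat u) ** Amat g H l u1 u2 u) (u1 + yi)"
      if "P l (g*H) (u2-u1) yi = 0" for yi
      using eig[of g H l u1 u2 u "u1+yi"] detK1[of g H l u1 u2 "u1+yi"] that u by simp
    then show ?thesis using y by (intro exI[of _ "u1+y1"] exI[of _ "u1+y2"] exI[of _ "u1+y3"]) auto
  next
    assume u: "u = u2"
    have l: "0 < 1 - l" "1 - l < 1" using assms by auto
    obtain y1 y2 y3 where y: "y1 < y2" "y2 < y3" "P (1-l) (g*H) (u1-u2) y1 = 0"
      "P (1-l) (g*H) (u1-u2) y2 = 0" "P (1-l) (g*H) (u1-u2) y3 = 0"
      using roots[OF l G] by blast
    have "is_eigenvalue (matrix_inv (Mmat u) ** Amat g H l u1 u2 u) (u2 + yi)"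
      if "P (1-l) (g*H) (u1-u2) yi = 0" for yi
      using eig[of g H l u1 u2 u "u2+yi"] detK2[of g H l u1 u2 "u2+yi"] that u by simp
    then show ?thesis using y by (intro exI[of _ "u2+y1"] exI[of _ "u2+y2"] exI[of _ "u2+y3"]) auto
  qed
qed
end
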